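(* Let $w\in\mathcal W$ and $\rho_c>0$. Let $\gamma_c^\star>0$ be a solution of \[\Psi\big(\widehat\theta_c-\gamma^{-1}\lambda(w,\widehat x_c)\big)+\gamma^{-1}\big\langle\nabla\Psi\big(\widehat\theta_c-\gamma^{-1}\lambda(w,\widehat x_c)\big),\lambda(w,\widehat x_c)\big\rangle=\Psi(\widehat\theta_c)-\rho_c,\] and $\theta_c^\star=\widehat\theta_c-\lambda(w,\widehat x_c)/\gamma_c^\star$. Then the supremum $\sup_{\mathbb Q\in\mathbb B_{Y|\widehat x_c}}\mathbb E_{\mathbb Q}[\ell_\lambda(\widehat x_c,Y,w)]$ is attained by the distribution $\mathbb Q^\star_{Y|\widehat x_c}$ with density $f(\cdot|\theta_c^\star)$.
   Context: Exponential family: $\nu$ a measure on $\mathcal Y\subseteq\mathbb R^m$, $h\ge0$, $T:\mathcal Y\to\mathbb R^p$; $f(y|\theta)=h(y)\exp(\langle\theta,T(y)\rangle-\Psi(\theta))$ density w.r.t. $\nu$; $\Theta=\{\theta\in\mathbb R^p:\int he^{\langle\theta,T\rangle}d\nu<\infty\}$, $\Psi(\theta)=\log\int he^{\langle\theta,T\rangle}d\nu$; regular family ($\Theta$ open, $T_i$ affinely independent). $\mathcal X\subseteq\mathbb R^n$, $\widehat x_c\in\mathcal X$, $\mathcal W$ finite-dimensional, $\lambda:\mathcal W\times\mathcal X\to\Theta$ jointly continuous; $\ell_\lambda(x,y,w)=\Psi(\lambda(w,x))-\langle T(y),\lambda(w,x)\rangle$. $\widehat\theta_c\in\Theta$. KL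 divergence $\mathrm{KL}(\mathbb P_1\|\mathbb P_2)=\mathbb E_{\mathbb P_1}[\log d\mathbb P_1/d\mathbb P_2]$. $\mathbb B_{Y|\widehat x_c}$ is the set of distributions on $\mathcal Y$ with density $f(\cdot|\theta)$ for some $\theta\in\Theta$ satisfying $\mathrm{KL}(f(\cdot|\theta)\|f(\cdot|\widehat\theta_c))\le\rho_c$. *)

theory Defs
  imports "HOL-Probability.Probability"
begin

definition expfam_Theta ::
  "'y measure \<Rightarrow> ('y \<Rightarrow> real) \<Rightarrow> ('y \<Rightarrow> 'p::euclidean_space) \<Rightarrow> 'p set" where
  "expfam_Theta nu h T =
     {\<theta>. (\<integral>\<^sup>+ y. ennreal (h y * exp (inner \<theta> (T y))) \<partial>nu) < \<infinity>}"

definition expfam_Psi ::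
  "'y measure \<Rightarrow> ('y \<Rightarrow> real) \<Rightarrow> ('y \<Rightarrow> 'p::euclidean_space) \<Rightarrow> 'p \<Rightarrow> real" where
  "expfam_Psi nu h T \<theta> = ln (\<integral> y. h y * exp (inner \<theta> (T y)) \<partial>nu)"

definition expfam_density ::
  "'y measure \<Rightarrow> ('y \<Rightarrow> real) \<Rightarrow> ('y \<Rightarrow> 'p::euclidean_space) \<Rightarrow> 'p \<Rightarrow> 'y \<Rightarrow> real" where
  "expfam_density nu h T \<theta> y = h y * exp (inner \<theta> (T y) - expfam_Psi nu h T \<theta>)"

definition expfam_dist ::
  "'y measure \<Rightarrow> ('y \<Rightarrow> real) \<Rightarrow> ('y \<Rightarrow> 'p::euclidean_space) \<Rightarrow> 'p \<Rightarrow> 'y measure" where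
  "expfam_dist nu h T \<theta> = density nu (\<lambda>y. ennreal (expfam_density nu h T \<theta> y))"

text \<open>KL(P1 || P2) = E_P1[log dP1/dP2] (natural logarithm); note the library's
  argument order: KL_divergence b M N is the divergence of N from M.\<close>
definition KL :: "'y measure \<Rightarrow> 'y measure \<Rightarrow> real" where
  "KL P1 P2 = KL_divergence (exp 1) P2 P1"

text \<open>Regular family: Theta open and the components of T affinely independent
  (no non-trivial affine relation a . T(y) = c holds nu-almost everywhere).\<close>
definition regular_expfam ::
  "'y measure \<Rightarrow> ('y \<Rightarrow> real) \<Rightarrow> ('y \<Rightarrow> 'p::euclidean_space) \<Rightarrow> bool" where
  "regular_expfam nu h T \<longleftrightarrow>
     open (expfam_Theta nu h T) \<and>
     (\<forall>a c. (AE y in nu. inner a (T y) = c) \<longrightarrow> a = 0)"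

definition loss_lambda ::
  "'y measure \<Rightarrow> ('y \<Rightarrow> real) \<Rightarrow> ('y \<Rightarrow> 'p::euclidean_space) \<Rightarrow> ('w \<Rightarrow> 'x \<Rightarrow> 'p)
     \<Rightarrow> 'x \<Rightarrow> 'y \<Rightarrow> 'w \<Rightarrow> real" where
  "loss_lambda nu h T lam x y w =
     expfam_Psi nu h T (lam w x) - inner (T y) (lam w x)"

definition KL_ball ::
  "'y measure \<Rightarrow> ('y \<Rightarrow> real) \<Rightarrow> ('y \<Rightarrow> 'p::euclidean_space) \<Rightarrow> 'p \<Rightarrow> real \<Rightarrow> 'y measure set" where
  "KL_ball nu h T \<theta>hat \<rho> =
     {expfam_dist nu h T \<theta> | \<theta>. \<theta> \<in> expfam_Theta nu h T \<and>
        KL (expfam_dist nu h T \<theta>) (expfam_dist nu h T \<theta>hat) \<le> \<rho>}"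

end

theory Submission
  imports Defs
begin

locale EF =
  fixes nu :: "'y measure" and h :: "'y \<Rightarrow> real" and T :: "'y \<Rightarrow> 'p::euclidean_space"
  assumes h_meas: "h \<in> borel_measurable nu" and T_meas: "T \<in> borel_measurable nu"
    and h_nonneg: "\<And>y. y \<in> space nu \<Longrightarrow> 0 \<le> h y"
    and open_Theta: "open (expfam_Theta nu h T)"
begin

declare h_meas[measurable] T_meas[measurable]

abbreviation "Th \<equiv> expfam_Theta nu h T"
abbreviation "Ps \<equiv> expfam_Psi nu h T"
abbreviation "ff \<equiv> expfam_density nu h T"
abbreviation "Z \<theta> \<equiv> (\<integral>y. h y * exp (inner \<theta> (T y)) \<partial>nu)"
abbreviation "MM \<theta> d \<equiv> (\<integral>y. ff \<theta> y * inner d (T y) \<partial>nu)"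

lemma ff_meas[measurable]: "ff \<theta> \<in> borel_measurable nu"
  unfolding expfam_density_def by measurable

lemma ff_nonneg: "y \<in> space nu \<Longrightarrow> 0 \<le> ff \<theta> y"
  unfolding expfam_density_def using h_nonneg by simp

lemma int_Z: assumes "\<theta> \<in> Th" shows "integrable nu (\<lambda>y. h y * exp (inner \<theta> (T y)))"
  apply (rule integrableI_nonneg)
  using assms h_nonneg by (auto simp: expfam_Theta_def)

lemma Z_nonneg: "0 \<le> Z \<theta>"
  by (rule integral_nonneg_AE) (auto simp: h_nonneg)

lemma abs_le_exp: fixes s x :: real assumes "s > 0" shows "\<bar>x\<bar> \<le> (exp (s*x) + exp (-(s*x))) / s"
proof -
  have "s * \<bar>x\<bar> \<le> exp (s * \<bar>x\<bar>)" using exp_ge_add_one_self[of "s*\<bar>x\<bar>"] by linarith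
  also have "\<dots> \<le> exp (s*x) + exp (-(s*x))"
    using assms by (cases "x \<ge> 0") (auto simp: abs_if)
  finally show ?thesis using assms by (simp add: field_simps abs_mult)
qed

lemma int_lin: assumes "\<theta> \<in> Th"
  shows "integrable nu (\<lambda>y. h y * exp (inner \<theta> (T y)) * inner d (T y))"
proof -
  obtain e where e: "e > 0" "ball \<theta> e \<subseteq> Th" using open_Theta assms open_contains_ball by blast
  define s where "s = e / (2 * (norm d + 1))"
  have nd: "0 < 2 * (norm d + 1)" by (smt (verit) norm_ge_zero)
  have s: "s > 0" unfolding s_def by (intro divide_pos_pos e(1) nd)
  have sn: "s * norm d < e"
  proof -
    have "s * norm d \<le> s * (norm d + 1)" using s by simp
    also have "\<dots> = e / 2" using nd by (simp add: s_def field_simps)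
    finally show ?thesis using e by simp
  qed
  have p: "\<theta> + s *\<^sub>R d \<in> Th" "\<theta> - s *\<^sub>R d \<in> Th"
    using e sn s by (auto intro!: subsetD[OF e(2)] simp: dist_norm)
  have I: "integrable nu (\<lambda>y. (h y * exp (inner (\<theta> + s *\<^sub>R d) (T y)) + h y * exp (inner (\<theta> - s *\<^sub>R d) (T y))) / s)"
    using int_Z[OF p(1)] int_Z[OF p(2)] by auto
  show ?thesis
  proof (rule Bochner_Integration.integrable_bound[OF I])
    show "AE y in nu. norm (h y * exp (inner \<theta> (T y)) * inner d (T y))
       \<le> norm ((h y * exp (inner (\<theta> + s *\<^sub>R d) (T y)) + h y * exp (inner (\<theta> - s *\<^sub>R d) (T y))) / s)"
    proof (rule AE_I2)
      fix y assume y: "y \<in> space nu"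
      have hy: "0 \<le> h y" using h_nonneg y .
      have "norm (h y * exp (inner \<theta> (T y)) * inner d (T y)) = h y * exp (inner \<theta> (T y)) * \<bar>inner d (T y)\<bar>"
        using hy by (simp add: abs_mult)
      also have "\<dots> \<le> h y * exp (inner \<theta> (T y)) * ((exp (s * inner d (T y)) + exp (-(s * inner d (T y)))) / s)"
        using hy abs_le_exp[OF s] by (intro mult_left_mono) auto
      also have "\<dots> = (h y * exp (inner (\<theta> + s *\<^sub>R d) (T y)) + h y * exp (inner (\<theta> - s *\<^sub>R d) (T y))) / s"
        by (simp add: inner_add_left inner_diff_left exp_add exp_diff exp_minus field_simps)
      also have "\<dots> = norm \<dots>" using hy s by simp
      finally show "norm (h y * exp (inner \<theta> (T y)) * inner d (T y))
       \<le> norm ((h y * exp (inner (\<theta> + s *\<^sub>R d) (T y)) + h y * exp (inner (\<theta> - s *\<^sub>R d) (T y))) / s)" .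
    qed
  qed measurable
qed

lemma ff_eq: assumes "Z \<theta> > 0" shows "ff \<theta> y = h y * exp (inner \<theta> (T y)) / Z \<theta>"
  using assms by (simp add: expfam_density_def expfam_Psi_def exp_diff)

lemma int_ff_lin: assumes "\<theta> \<in> Th" shows "integrable nu (\<lambda>y. ff \<theta> y * inner d (T y))"
proof -
  have "(\<lambda>y. ff \<theta> y * inner d (T y)) = (\<lambda>y. h y * exp (inner \<theta> (T y)) * inner d (T y) * exp (- Ps \<theta>))"
    by (auto simp: expfam_density_def exp_diff exp_minus field_simps)
  then show ?thesis using int_lin[OF assms, of d] by simp
qed

lemma int_ff: assumes "\<theta> \<in> Th" shows "integrable nu (ff \<theta>)"
proof -
  have "ff \<theta> = (\<lambda>y. h y * exp (inner \<theta> (T y)) * exp (- Ps \<theta>))"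
    by (auto simp: expfam_density_def exp_diff exp_minus field_simps)
  then show ?thesis using int_Z[OF assms] by simp
qed

lemma int_ff_one: assumes "\<theta> \<in> Th" "Z \<theta> > 0" shows "(\<integral>y. ff \<theta> y \<partial>nu) = 1"
proof -
  have "ff \<theta> = (\<lambda>y. h y * exp (inner \<theta> (T y)) / Z \<theta>)" using ff_eq[OF assms(2)] by auto
  then show ?thesis using assms by simp
qed

lemma int_ff_exp: assumes "\<theta> \<in> Th" "\<theta> + d \<in> Th" "Z \<theta> > 0"
  shows "integrable nu (\<lambda>y. ff \<theta> y * exp (inner d (T y) - c))"
    "(\<integral>y. ff \<theta> y * exp (inner d (T y) - c) \<partial>nu) = exp (- c) * (Z (\<theta> + d) / Z \<theta>)"
proof -
  have e: "(\<lambda>y. ff \<theta> y * exp (inner d (T y) - c)) = (\<lambda>y. h y * exp (inner (\<theta> + d) (T y)) * (exp (- c) / Z \<theta>))"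
    using ff_eq[OF assms(3)] by (auto simp: inner_add_left exp_add exp_diff exp_minus field_simps)
  show "integrable nu (\<lambda>y. ff \<theta> y * exp (inner d (T y) - c))"
    unfolding e using int_Z[OF assms(2)] by simp
  show "(\<integral>y. ff \<theta> y * exp (inner d (T y) - c) \<partial>nu) = exp (- c) * (Z (\<theta> + d) / Z \<theta>)"
    unfolding e by simp
qed

lemma MM_scale: "MM \<theta> (a *\<^sub>R d) = a * MM \<theta> d"
  by (simp add: inner_scaleR_left mult.left_commute)

lemma MM_add: assumes "\<theta> \<in> Th" shows "MM \<theta> (d1 + d2) = MM \<theta> d1 + MM \<theta> d2"
proof -
  have "MM \<theta> (d1 + d2) = (\<integral>y. ff \<theta> y * inner d1 (T y) + ff \<theta> y * inner d2 (T y) \<partial>nu)"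
    by (simp add: inner_add_left distrib_left)
  also have "\<dots> = MM \<theta> d1 + MM \<theta> d2"
    by (rule Bochner_Integration.integral_add) (auto intro: int_ff_lin[OF assms])
  finally show ?thesis .
qed

lemma grad_ineq: assumes "\<theta> \<in> Th" "\<theta> + d \<in> Th" "Z \<theta> > 0" "Z (\<theta> + d) > 0"
  shows "MM \<theta> d \<le> Ps (\<theta> + d) - Ps \<theta>"
proof -
  define m where "m = MM \<theta> d"
  have i1: "integrable nu (ff \<theta>)" by (rule int_ff[OF assms(1)])
  have i2: "integrable nu (\<lambda>y. ff \<theta> y * inner d (T y))" by (rule int_ff_lin[OF assms(1)])
  have "(\<integral>y. ff \<theta> y * (1 + inner d (T y) - m) \<partial>nu) = (\<integral>y. ff \<theta> y + ff \<theta> y * inner d (T y) - m * ff \<theta> y \<partial>nu)"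
    by (simp add: algebra_simps)
  also have "\<dots> = 1 + m - m * 1"
    using i1 i2 int_ff_one[OF assms(1,3)] by (simp add: m_def)
  finally have A: "(\<integral>y. ff \<theta> y * (1 + inner d (T y) - m) \<partial>nu) = 1" by simp
  have "(\<integral>y. ff \<theta> y * (1 + inner d (T y) - m) \<partial>nu) \<le> (\<integral>y. ff \<theta> y * exp (inner d (T y) - m) \<partial>nu)"
  proof (rule integral_mono)
    show "integrable nu (\<lambda>y. ff \<theta> y * (1 + inner d (T y) - m))"
      using i1 i2 by (simp add: algebra_simps)
    show "integrable nu (\<lambda>y. ff \<theta> y * exp (inner d (T y) - m))" by (rule int_ff_exp(1)[OF assms(1-3)])
    fix y assume "y \<in> space nu"
    moreover have "1 + inner d (T y) - m \<le> exp (inner d (T y) - m)"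
      using exp_ge_add_one_self[of "inner d (T y) - m"] by linarith
    ultimately show "ff \<theta> y * (1 + inner d (T y) - m) \<le> ff \<theta> y * exp (inner d (T y) - m)"
      using ff_nonneg by (intro mult_left_mono) auto
  qed
  then have "1 \<le> exp (- m) * (Z (\<theta> + d) / Z \<theta>)" using A int_ff_exp(2)[OF assms(1-3)] by simp
  then have "exp m * Z \<theta> \<le> Z (\<theta> + d)" using assms(3) by (simp add: exp_minus field_simps)
  then have "exp (m + ln (Z \<theta>)) \<le> exp (ln (Z (\<theta> + d)))" using assms(3,4) by (simp add: exp_add)
  then have "m + ln (Z \<theta>) \<le> ln (Z (\<theta> + d))" by simp
  then show ?thesis by (simp add: m_def expfam_Psi_def)
qed

lemma dist_integral: assumes "g \<in> borel_measurable nu"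
  shows "integral\<^sup>L (expfam_dist nu h T \<theta>) g = (\<integral>y. ff \<theta> y * g y \<partial>nu)"
  unfolding expfam_dist_def using assms
  by (subst integral_density) (auto simp: ff_nonneg)

lemma KL_formula: assumes "\<theta> \<in> Th" "\<theta>h \<in> Th" "Z \<theta> > 0" "Z \<theta>h > 0"
  shows "KL (expfam_dist nu h T \<theta>) (expfam_dist nu h T \<theta>h) = MM \<theta> (\<theta> - \<theta>h) - Ps \<theta> + Ps \<theta>h"
proof -
  define r where "r y = exp (inner (\<theta> - \<theta>h) (T y) - Ps \<theta> + Ps \<theta>h)" for y
  have r_meas[measurable]: "r \<in> borel_measurable nu" unfolding r_def by measurable
  have fr: "ff \<theta> y = ff \<theta>h y * r y" for y
  proof -
    have eq: "(inner \<theta>h (T y) - Ps \<theta>h) + (inner (\<theta> - \<theta>h) (T y) - Ps \<theta> + Ps \<theta>h) = inner \<theta> (T y) - Ps \<theta>"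
      by (simp add: inner_diff_left)
    have "ff \<theta>h y * r y = h y * exp ((inner \<theta>h (T y) - Ps \<theta>h) + (inner (\<theta> - \<theta>h) (T y) - Ps \<theta> + Ps \<theta>h))"
      by (simp only: expfam_density_def r_def exp_add mult.assoc)
    also have "\<dots> = ff \<theta> y"
      unfolding eq by (simp add: expfam_density_def)
    finally show ?thesis by simp
  qed
  let ?P = "expfam_dist nu h T \<theta>" and ?Q = "expfam_dist nu h T \<theta>h"
  have dd: "?P = density ?Q (\<lambda>y. ennreal (r y))"
  proof -
    have "density ?Q (\<lambda>y. ennreal (r y)) = density nu (\<lambda>y. ennreal (ff \<theta>h y) * ennreal (r y))"
      unfolding expfam_dist_def by (rule density_density_eq) measurable
    also have "\<dots> = density nu (\<lambda>y. ennreal (ff \<theta> y))"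
      by (rule density_cong) (auto simp: fr ennreal_mult ff_nonneg r_def)
    finally show ?thesis by (simp add: expfam_dist_def)
  qed
  have "emeasure ?P (space ?P) = (\<integral>\<^sup>+y. ennreal (ff \<theta> y) \<partial>nu)"
    unfolding expfam_dist_def by (simp add: emeasure_density)
  also have "\<dots> = ennreal (\<integral>y. ff \<theta> y \<partial>nu)"
    by (rule nn_integral_eq_integral) (auto simp: int_ff[OF assms(1)] ff_nonneg)
  also have "\<dots> = 1" using int_ff_one[OF assms(1,3)] by simp
  finally have prob: "prob_space ?P" by (rule prob_spaceI)
  have sQ: "sets ?Q = sets nu" by (simp add: expfam_dist_def)
  have rQ: "r \<in> borel_measurable ?Q" using r_meas measurable_cong_sets[OF sQ refl] by blast
  have rQ': "(\<lambda>y. ennreal (r y)) \<in> borel_measurable ?Q" using rQ by measurable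
  have ae: "AE y in ?Q. ennreal (r y) = RN_deriv ?Q ?P y"
    by (rule RN_deriv_unique_sigma_finite) (auto simp: rQ' dd[symmetric] prob prob_space_imp_sigma_finite)
  have ae2: "AE y in ?P. ennreal (r y) = RN_deriv ?Q ?P y"
  proof -
    have "AE y in density ?Q (\<lambda>y. ennreal (r y)). ennreal (r y) = RN_deriv ?Q ?P y"
      using ae rQ' by (subst AE_density) (auto elim: AE_mp)
    then show ?thesis by (simp only: dd[symmetric])
  qed
  have "KL ?P ?Q = integral\<^sup>L ?P (entropy_density (exp 1) ?Q ?P)"
    by (simp add: KL_def KL_divergence_def)
  also have "\<dots> = integral\<^sup>L ?P (\<lambda>y. inner (\<theta> - \<theta>h) (T y) - Ps \<theta> + Ps \<theta>h)"
  proof (rule integral_cong_AE)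
    show "AE y in ?P. entropy_density (exp 1) ?Q ?P y = inner (\<theta> - \<theta>h) (T y) - Ps \<theta> + Ps \<theta>h"
      using ae2
    proof eventually_elim
      case (elim y)
      have "enn2real (RN_deriv ?Q ?P y) = r y" unfolding elim[symmetric] by (simp add: r_def)
      then show ?case by (simp add: entropy_density_def log_def r_def)
    qed
  qed (auto simp: expfam_dist_def)
  also have "\<dots> = (\<integral>y. ff \<theta> y * inner (\<theta> - \<theta>h) (T y) + (Ps \<theta>h - Ps \<theta>) * ff \<theta> y \<partial>nu)"
    by (subst dist_integral) (auto simp: algebra_simps)
  also have "\<dots> = MM \<theta> (\<theta> - \<theta>h) + (Ps \<theta>h - Ps \<theta>) * 1"
    using int_ff_lin[OF assms(1)] int_ff[OF assms(1)] int_ff_one[OF assms(1,3)] by simp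
  finally show ?thesis by simp
qed

lemma Z_pos_all: assumes "\<theta>h \<in> Th" "Z \<theta>h > 0" "\<theta> \<in> Th" shows "Z \<theta> > 0"
proof (rule ccontr)
  assume "\<not> Z \<theta> > 0"
  then have "Z \<theta> = 0" using Z_nonneg[of \<theta>] by linarith
  then have "AE y in nu. h y * exp (inner \<theta> (T y)) = 0"
    using integral_nonneg_eq_0_iff_AE[OF int_Z[OF assms(3)]] h_nonneg by auto
  then have "AE y in nu. h y * exp (inner \<theta>h (T y)) = 0" by eventually_elim simp
  then have "Z \<theta>h = 0" by (rule integral_eq_zero_AE)
  then show False using assms(2) by simp
qed

lemma degenerate: assumes "\<theta>h \<in> Th" "Z \<theta>h = 0"
  shows "AE y in expfam_dist nu h T \<theta>. P y"
proof -
  have "AE y in nu. h y * exp (inner \<theta>h (T y)) = 0"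
    using integral_nonneg_eq_0_iff_AE[OF int_Z[OF assms(1)]] h_nonneg assms(2) by auto
  then have "AE y in nu. ff \<theta> y = 0" by eventually_elim (simp add: expfam_density_def)
  then show ?thesis unfolding expfam_dist_def
    by (subst AE_density) (auto elim: AE_mp)
qed

lemma main:
  fixes l g :: 'p and \<gamma> \<rho> :: real and \<theta>h :: 'p and lossf :: "'y \<Rightarrow> real" and c :: real
  defines "\<theta>s \<equiv> \<theta>h - (1 / \<gamma>) *\<^sub>R l"
  assumes \<theta>h: "\<theta>h \<in> Th" and \<theta>s: "\<theta>s \<in> Th" and \<rho>: "\<rho> > 0" and \<gamma>: "\<gamma> > 0"
    and grad: "GDERIV Ps \<theta>s :> g"
    and eq: "Ps \<theta>s + (1 / \<gamma>) * inner g l = Ps \<theta>h - \<rho>"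
    and lossf: "\<And>y. lossf y = c - inner (T y) l"
  shows "expfam_dist nu h T \<theta>s \<in> KL_ball nu h T \<theta>h \<rho>
     \<and> (\<forall>Q \<in> KL_ball nu h T \<theta>h \<rho>.
          (\<integral>y. lossf y \<partial>Q) \<le> (\<integral>y. lossf y \<partial>expfam_dist nu h T \<theta>s))"
proof (cases "Z \<theta>h = 0")
  case True
  have z: "integral\<^sup>L (expfam_dist nu h T \<theta>) f = 0" for \<theta> and f :: "'y \<Rightarrow> real"
    by (rule integral_eq_zero_AE) (rule degenerate[OF \<theta>h True])
  have "KL (expfam_dist nu h T \<theta>s) (expfam_dist nu h T \<theta>h) = 0"
    by (simp add: KL_def KL_divergence_def z)
  then have "expfam_dist nu h T \<theta>s \<in> KL_ball nu h T \<theta>h \<rho>"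
    using \<theta>s \<rho> unfolding KL_ball_def by auto
  moreover have "\<forall>Q \<in> KL_ball nu h T \<theta>h \<rho>. (\<integral>y. lossf y \<partial>Q) \<le> (\<integral>y. lossf y \<partial>expfam_dist nu h T \<theta>s)"
    unfolding KL_ball_def by (auto simp: z)
  ultimately show ?thesis by blast
next
  case False
  then have Zh: "Z \<theta>h > 0" using Z_nonneg[of \<theta>h] by linarith
  have Zp: "\<And>\<theta>. \<theta> \<in> Th \<Longrightarrow> Z \<theta> > 0" using Z_pos_all[OF \<theta>h Zh] .
  define m where "m = MM \<theta>s l"
  obtain e where e: "e > 0" "ball \<theta>s e \<subseteq> Th" using open_Theta \<theta>s open_contains_ball by blast
  define \<delta> where "\<delta> = e / (norm l + 1)"
  have nl: "0 < norm l + 1" by (smt (verit) norm_ge_zero)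
  have \<delta>: "\<delta> > 0" unfolding \<delta>_def by (intro divide_pos_pos e(1) nl)
  have inball: "\<theta>s + t *\<^sub>R l \<in> Th" if "\<bar>t\<bar> < \<delta>" for t
  proof -
    have "\<bar>t\<bar> * norm l \<le> \<bar>t\<bar> * (norm l + 1)" by (simp add: mult_left_mono)
    also have "\<dots> < \<delta> * (norm l + 1)" using that nl by (intro mult_strict_right_mono) auto
    also have "\<dots> = e" using nl by (simp add: \<delta>_def)
    finally show ?thesis using e(2) by (auto simp: dist_norm intro!: subsetD[OF e(2)])
  qed
  have locmin: "\<forall>t. \<bar>0 - t\<bar> < \<delta> \<longrightarrow> (\<lambda>t. Ps (\<theta>s + t *\<^sub>R l) - t * m) 0 \<le> (\<lambda>t. Ps (\<theta>s + t *\<^sub>R l) - t * m) t"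
  proof (intro allI impI)
    fix t :: real assume "\<bar>0 - t\<bar> < \<delta>"
    then have t: "\<theta>s + t *\<^sub>R l \<in> Th" using inball by simp
    have "MM \<theta>s (t *\<^sub>R l) \<le> Ps (\<theta>s + t *\<^sub>R l) - Ps \<theta>s"
      by (rule grad_ineq[OF \<theta>s t Zp[OF \<theta>s] Zp[OF t]])
    then show "(\<lambda>t. Ps (\<theta>s + t *\<^sub>R l) - t * m) 0 \<le> (\<lambda>t. Ps (\<theta>s + t *\<^sub>R l) - t * m) t"
      using MM_scale[of \<theta>s t l] unfolding m_def[symmetric] by simp
  qed
  have d1: "((\<lambda>t::real. \<theta>s + t *\<^sub>R l) has_derivative (\<lambda>t. t *\<^sub>R l)) (at 0)"
    by (auto intro!: derivative_eq_intros)
  have d2: "(Ps has_derivative (\<lambda>x. inner x g)) (at (\<theta>s + 0 *\<^sub>R l))"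
    using grad by (simp add: gderiv_def)
  have "((\<lambda>t. Ps (\<theta>s + t *\<^sub>R l)) has_derivative (\<lambda>t. inner (t *\<^sub>R l) g)) (at 0)"
    using has_derivative_compose[OF d1 d2] by simp
  moreover have "(\<lambda>t. inner (t *\<^sub>R l) g) = (*) (inner l g)" by (auto simp: inner_scaleR_left)
  ultimately have "DERIV (\<lambda>t. Ps (\<theta>s + t *\<^sub>R l)) 0 :> inner l g"
    by (simp add: has_field_derivative_def)
  then have "DERIV (\<lambda>t. Ps (\<theta>s + t *\<^sub>R l) - t * m) 0 :> inner l g - m"
    by (auto intro!: derivative_eq_intros)
  then have "inner l g - m = 0" by (rule DERIV_local_min[OF _ \<delta> locmin])
  then have gm: "inner g l = m" by (simp add: inner_commute)
  have "lossf = (\<lambda>y. c - inner (T y) l)" using lossf by auto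
  then have lm[measurable]: "lossf \<in> borel_measurable nu" by simp
  have lossint: "(\<integral>y. lossf y \<partial>expfam_dist nu h T \<theta>) = c - MM \<theta> l" if th: "\<theta> \<in> Th" for \<theta>
  proof -
    have "(\<integral>y. lossf y \<partial>expfam_dist nu h T \<theta>) = (\<integral>y. c * ff \<theta> y - ff \<theta> y * inner l (T y) \<partial>nu)"
      by (subst dist_integral) (auto simp: lossf algebra_simps inner_commute)
    also have "\<dots> = c * 1 - MM \<theta> l"
      using int_ff[OF th] int_ff_lin[OF th] int_ff_one[OF th Zp[OF th]] by simp
    finally show ?thesis by simp
  qed
  have KLs: "KL (expfam_dist nu h T \<theta>s) (expfam_dist nu h T \<theta>h) = \<rho>"
  proof -
    have "\<theta>s - \<theta>h = (- (1 / \<gamma>)) *\<^sub>R l" by (simp add: \<theta>s_def)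
    then have "MM \<theta>s (\<theta>s - \<theta>h) = - (1 / \<gamma>) * m" by (simp only: MM_scale m_def)
    then show ?thesis using KL_formula[OF \<theta>s \<theta>h Zp[OF \<theta>s] Zh] eq gm by simp
  qed
  have part1: "expfam_dist nu h T \<theta>s \<in> KL_ball nu h T \<theta>h \<rho>"
    unfolding KL_ball_def using \<theta>s KLs by auto
  have part2: "(\<integral>y. lossf y \<partial>Q) \<le> (\<integral>y. lossf y \<partial>expfam_dist nu h T \<theta>s)"
    if Q: "Q \<in> KL_ball nu h T \<theta>h \<rho>" for Q
  proof -
    obtain \<theta> where th: "\<theta> \<in> Th" and kl: "KL (expfam_dist nu h T \<theta>) (expfam_dist nu h T \<theta>h) \<le> \<rho>"
      and Qe: "Q = expfam_dist nu h T \<theta>" using Q unfolding KL_ball_def by auto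
    have k: "MM \<theta> (\<theta> - \<theta>h) - Ps \<theta> + Ps \<theta>h \<le> \<rho>" using kl KL_formula[OF th \<theta>h Zp[OF th] Zh] by simp
    have th2: "\<theta> + (\<theta>s - \<theta>) \<in> Th" using \<theta>s by simp
    have gi: "MM \<theta> (\<theta>s - \<theta>) \<le> Ps \<theta>s - Ps \<theta>"
      using grad_ineq[OF th th2 Zp[OF th] Zp[OF th2]] by simp
    have "\<theta>s - \<theta> = (-1) *\<^sub>R (\<theta> - \<theta>h) + (- (1 / \<gamma>)) *\<^sub>R l" by (simp add: \<theta>s_def algebra_simps)
    then have "MM \<theta> (\<theta>s - \<theta>) = - MM \<theta> (\<theta> - \<theta>h) - (1 / \<gamma>) * MM \<theta> l"
      by (simp only: MM_add[OF th] MM_scale)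
    with gi k eq[unfolded gm] have "(1 / \<gamma>) * m \<le> (1 / \<gamma>) * MM \<theta> l" by linarith
    then have "m \<le> MM \<theta> l" using \<gamma> by (simp add: divide_le_cancel)
    then show ?thesis unfolding Qe using lossint[OF th] lossint[OF \<theta>s] by (simp add: m_def)
  qed
  show ?thesis using part1 part2 by blast
qed

end

theorem propositionC3:
  fixes nu :: "'y::euclidean_space measure"
    and Y :: "'y set"
    and h :: "'y \<Rightarrow> real"
    and T :: "'y \<Rightarrow> 'p::euclidean_space"
    and X :: "'x::euclidean_space set"
    and xhat :: 'x
    and lam :: "'w::euclidean_space \<Rightarrow> 'x \<Rightarrow> 'p"
    and \<theta>hat :: 'p
    and w :: 'w
    and \<rho> \<gamma> :: real
    and g :: 'p
  assumes Y: "space nu = Y"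
    and h_meas: "h \<in> borel_measurable nu"
    and T_meas: "T \<in> borel_measurable nu"
    and h_nonneg: "\<And>y. y \<in> Y \<Longrightarrow> 0 \<le> h y"
    and regular: "regular_expfam nu h T"
    and xhat: "xhat \<in> X"
    and lam_cont: "continuous_on (UNIV \<times> X) (\<lambda>(w, x). lam w x)"
    and lam_Theta: "\<And>w x. x \<in> X \<Longrightarrow> lam w x \<in> expfam_Theta nu h T"
    and \<theta>hat: "\<theta>hat \<in> expfam_Theta nu h T"
    and \<rho>: "\<rho> > 0"
    and \<gamma>: "\<gamma> > 0"
    and \<theta>star_Theta: "\<theta>hat - (1 / \<gamma>) *\<^sub>R lam w xhat \<in> expfam_Theta nu h T"
    and grad: "GDERIV (expfam_Psi nu h T) (\<theta>hat - (1 / \<gamma>) *\<^sub>R lam w xhat) :> g"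
    and eq: "expfam_Psi nu h T (\<theta>hat - (1 / \<gamma>) *\<^sub>R lam w xhat)
               + (1 / \<gamma>) * inner g (lam w xhat)
             = expfam_Psi nu h T \<theta>hat - \<rho>"
  shows "expfam_dist nu h T (\<theta>hat - (1 / \<gamma>) *\<^sub>R lam w xhat) \<in> KL_ball nu h T \<theta>hat \<rho>
     \<and> (\<forall>Q \<in> KL_ball nu h T \<theta>hat \<rho>.
          (\<integral>y. loss_lambda nu h T lam xhat y w \<partial>Q)
            \<le> (\<integral>y. loss_lambda nu h T lam xhat y w
                   \<partial>expfam_dist nu h T (\<theta>hat - (1 / \<gamma>) *\<^sub>R lam w xhat)))"
proof -
  interpret EF nu h T
    using h_meas T_meas h_nonneg regular Y by unfold_locales (auto simp: regular_expfam_def)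
  show ?thesis
    by (rule main[OF \<theta>hat \<theta>star_Theta \<rho> \<gamma> grad eq, where lossf = "\<lambda>y. loss_lambda nu h T lam xhat y w"
          and c = "expfam_Psi nu h T (lam w xhat)"])
       (simp add: loss_lambda_def)
qed

end
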